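(* Let $G(V)$ be a network, $\varepsilon>0$, and $S\subseteq V$ with $|S|\ge2$ such that $R_{\mathrm{eff}}(u,v)\ge\varepsilon$ for all distinct $u,v\in S$. Then there is $S'\subseteq S$ with $|S'|\ge|S|/2$ such that $R_{\mathrm{eff}}(v,S\setminus\{v\})\ge\varepsilon/4$ for every $v\in S'$.
   Context: A network is a finite connected graph $G=(V,E)$ with symmetric conductances $c_{xy}\ge0$, $c_{xy}>0$ iff $xy\in E$; $R_{\mathrm{eff}}$ is effective resistance. For $v\in V$ and nonempty $T\subseteq V\setminus\{v\}$, $R_{\mathrm{eff}}(v,T)$ is the effective resistance between $v$ and the vertex obtained by identifying all vertices of $T$ into one vertex (conductances from $x$ to the glued vertex being $\sum_{y\in T}c_{xy}$). *)

theory Defs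
  imports Main Complex_Main
begin

definition network :: "'a set \<Rightarrow> ('a \<Rightarrow> 'a \<Rightarrow> real) \<Rightarrow> bool" where
  "network V c \<longleftrightarrow> finite V \<and> V \<noteq> {} \<and>
     (\<forall>x y. c x y = c y x) \<and> (\<forall>x y. c x y \<ge> 0) \<and>
     (\<forall>x y. c x y > 0 \<longrightarrow> x \<in> V \<and> y \<in> V) \<and>
     (\<forall>x\<in>V. \<forall>y\<in>V. (\<lambda>a b. c a b > 0)\<^sup>*\<^sup>* x y)"

definition energy :: "'a set \<Rightarrow> ('a \<Rightarrow> 'a \<Rightarrow> real) \<Rightarrow> ('a \<Rightarrow> real) \<Rightarrow> real" where
  "energy V c f = (1/2) * (\<Sum>x\<in>V. \<Sum>y\<in>V. c x y * (f x - f y)^2)"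

text \<open>Effective conductance between v and the set T (all of T glued to one vertex),
by the Dirichlet principle: infimum of the energy over potentials equal to 1 at v and
0 on T.  Functions vanishing on T are exactly the potentials of the glued network.\<close>
definition eff_cond :: "'a set \<Rightarrow> ('a \<Rightarrow> 'a \<Rightarrow> real) \<Rightarrow> 'a \<Rightarrow> 'a set \<Rightarrow> real" where
  "eff_cond V c v T = Inf {energy V c f | f. f v = 1 \<and> (\<forall>x\<in>T. f x = 0)}"

definition R_eff_set :: "'a set \<Rightarrow> ('a \<Rightarrow> 'a \<Rightarrow> real) \<Rightarrow> 'a \<Rightarrow> 'a set \<Rightarrow> real" where
  "R_eff_set V c v T = 1 / eff_cond V c v T"

definition R_eff :: "'a set \<Rightarrow> ('a \<Rightarrow> 'a \<Rightarrow> real) \<Rightarrow> 'a \<Rightarrow> 'a \<Rightarrow> real" where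
  "R_eff V c u v = R_eff_set V c u {v}"

end

theory Submission
  imports Defs
begin

definition Lap :: "'a set \<Rightarrow> ('a \<Rightarrow> 'a \<Rightarrow> real) \<Rightarrow> ('a \<Rightarrow> real) \<Rightarrow> 'a \<Rightarrow> real" where
  "Lap V c f x = (\<Sum>y\<in>V. c x y * (f x - f y))"

definition W :: "'a set \<Rightarrow> ('a \<Rightarrow> 'a \<Rightarrow> real) \<Rightarrow> ('a \<Rightarrow> real) \<Rightarrow> ('a \<Rightarrow> real) \<Rightarrow> real" where
  "W V c f g = (1/2) * (\<Sum>x\<in>V. \<Sum>y\<in>V. c x y * (f x - f y) * (g x - g y))"

lemma green:
  assumes sym: "\<forall>x y. c x y = c y x"
  shows "(\<Sum>x\<in>V. g x * Lap V c f x) = W V c f g"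
proof -
  define A where "A = (\<Sum>x\<in>V. \<Sum>y\<in>V. c x y * (f x - f y) * g x)"
  have 1: "(\<Sum>x\<in>V. g x * Lap V c f x) = A"
    unfolding A_def Lap_def by (simp add: sum_distrib_left mult.commute mult.left_commute)
  have "A = (\<Sum>y\<in>V. \<Sum>x\<in>V. c x y * (f x - f y) * g x)" unfolding A_def by (rule sum.swap)
  also have "\<dots> = (\<Sum>x\<in>V. \<Sum>y\<in>V. c x y * (f y - f x) * g y)"
    by (intro sum.cong refl) (metis sym)
  finally have 2: "A = (\<Sum>x\<in>V. \<Sum>y\<in>V. c x y * (f y - f x) * g y)" .
  have "2 * A = (\<Sum>x\<in>V. \<Sum>y\<in>V. c x y * (f x - f y) * g x + c x y * (f y - f x) * g y)"
  proof -
    have "2 * A = A + (\<Sum>x\<in>V. \<Sum>y\<in>V. c x y * (f y - f x) * g y)" using 2 by simp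
    also have "\<dots> = (\<Sum>x\<in>V. \<Sum>y\<in>V. c x y * (f x - f y) * g x + c x y * (f y - f x) * g y)"
      unfolding A_def by (simp add: sum.distrib)
    finally show ?thesis .
  qed
  also have "\<dots> = (\<Sum>x\<in>V. \<Sum>y\<in>V. c x y * (f x - f y) * (g x - g y))"
    by (intro sum.cong refl) (simp add: algebra_simps)
  finally show ?thesis using 1 unfolding W_def by simp
qed

lemma W_sym: "W V c f g = W V c g f"
  unfolding W_def by (simp add: mult.commute mult.left_commute)

lemma energy_W: "energy V c f = W V c f f"
  unfolding W_def energy_def by (simp add: power2_eq_square mult.assoc)

lemma W_nonneg: "\<forall>x y. c x y \<ge> 0 \<Longrightarrow> W V c f f \<ge> 0"
  unfolding W_def by (auto intro!: sum_nonneg simp: mult.assoc mult_nonneg_nonneg)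

lemma lap_sum0:
  assumes "\<forall>x y. c x y = c y x"
  shows "(\<Sum>x\<in>V. Lap V c f x) = 0"
  using green[OF assms, where V=V and g="\<lambda>_. 1" and f=f] by (simp add: W_def)

lemma Lap_diff: "Lap V c (\<lambda>x. f x - g x) x = Lap V c f x - Lap V c g x"
  unfolding Lap_def by (simp add: sum_subtractf[symmetric] algebra_simps)

lemma Lap_scale: "Lap V c (\<lambda>x. f x / k) x = Lap V c f x / k"
  unfolding Lap_def sum_divide_distrib by (intro sum.cong refl) (simp add: diff_divide_distrib[symmetric])

lemma Lap_zero: "Lap V c (\<lambda>x. 0) x = 0"
  unfolding Lap_def by simp

lemma W_quad:
  "W V c (\<lambda>x. f x - t * g x) (\<lambda>x. f x - t * g x) = W V c f f - 2*t*W V c f g + t^2 * W V c g g"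
proof -
  have e: "\<And>x y. c x y * ((f x - t*g x) - (f y - t*g y)) * ((f x - t*g x) - (f y - t*g y))
     = c x y * (f x - f y)*(f x - f y) - 2*t*(c x y*(f x - f y)*(g x - g y)) + t^2*(c x y*(g x - g y)*(g x - g y))"
    by (simp add: algebra_simps power2_eq_square)
  show ?thesis unfolding W_def
    by (simp only: e sum.distrib sum_subtractf sum_distrib_left[symmetric]) (simp add: algebra_simps)
qed

lemma CS1:
  assumes "\<forall>x y. c x y \<ge> 0" "W V c f g = 1"
  shows "1 \<le> W V c f f * W V c g g"
proof -
  have q: "\<And>t. 0 \<le> W V c f f - 2*t + t^2 * W V c g g"
    using W_nonneg[OF assms(1), of V "\<lambda>x. f x - _ * g x"] W_quad[of V c f _ g] assms(2) by simp
  have gg: "W V c g g \<ge> 0" using W_nonneg[OF assms(1)] by blast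
  show ?thesis
  proof (cases "W V c g g = 0")
    case True
    from q[of "W V c f f / 2 + 1"] True show ?thesis by simp
  next
    case False
    with gg have p: "W V c g g > 0" by simp
    from q[of "1 / W V c g g"] p have "0 \<le> W V c f f - 1 / W V c g g"
      by (simp add: power2_eq_square field_simps)
    with p show ?thesis by (simp add: field_simps)
  qed
qed

lemma dirichlet_aux:
  assumes hr: "\<forall>x. 0 \<le> h x \<and> h x \<le> (1::real)"
  shows "\<And>V c. card (V - B) = n \<Longrightarrow> finite V \<Longrightarrow> B \<subseteq> V \<Longrightarrow> (\<forall>x y. c x y = c y x) \<Longrightarrow>
     (\<forall>x y. c x y \<ge> 0) \<Longrightarrow>
     \<exists>\<phi>. (\<forall>x\<in>B. \<phi> x = h x) \<and> (\<forall>x. 0 \<le> \<phi> x \<and> \<phi> x \<le> 1) \<and> (\<forall>x\<in>V-B. Lap V c \<phi> x = 0)"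
proof (induction n)
  case 0
  then have "V - B = {}" by simp
  then show ?case using hr by (intro exI[of _ h]) auto
next
  case (Suc n)
  from Suc.prems(1) obtain z where z: "z \<in> V - B" by (metis all_not_in_conv card.empty nat.distinct(1))
  define V' where "V' = V - {z}"
  define d where "d = (\<Sum>y\<in>V'. c z y)"
  define c' where "c' = (\<lambda>x y. c x y + c x z * c z y / d)"
  have finV': "finite V'" using Suc.prems(2) V'_def by simp
  have V: "V = insert z V'" "z \<notin> V'" using z V'_def by auto
  have "V' - B = (V - B) - {z}" using V'_def by auto
  then have cV': "card (V' - B) = n" using Suc.prems(1) z by (simp add: card_Diff_singleton)
  have BV': "B \<subseteq> V'" using Suc.prems(3) z V'_def by auto
  have dnn: "d \<ge> 0" unfolding d_def using Suc.prems(5) by (simp add: sum_nonneg)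
  have c'sym: "\<forall>x y. c' x y = c' y x" unfolding c'_def using Suc.prems(4) by (simp add: mult.commute)
  have c'nn: "\<forall>x y. c' x y \<ge> 0" unfolding c'_def using Suc.prems(5) dnn by (simp add: add_nonneg_nonneg)
  from Suc.IH[OF cV' finV' BV' c'sym c'nn] obtain \<phi>' where
    p1: "\<forall>x\<in>B. \<phi>' x = h x" and p2: "\<forall>x. 0 \<le> \<phi>' x \<and> \<phi>' x \<le> 1" and p3: "\<forall>x\<in>V'-B. Lap V' c' \<phi>' x = 0"
    by blast
  define N where "N = (\<Sum>y\<in>V'. c z y * \<phi>' y)"
  define \<phi> where "\<phi> = \<phi>'(z := N / d)"
  have d0: "d = 0 \<Longrightarrow> \<forall>y\<in>V'. c z y = 0"
    using Suc.prems(5) finV' unfolding d_def by (simp add: sum_nonneg_eq_0_iff)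
  have Nnn: "N \<ge> 0" unfolding N_def using Suc.prems(5) p2 by (simp add: sum_nonneg)
  have Nle: "N \<le> d" unfolding N_def d_def
    by (rule sum_mono) (use Suc.prems(5) p2 in \<open>simp add: mult_left_le\<close>)
  have r1: "\<forall>x\<in>B. \<phi> x = h x" using p1 z unfolding \<phi>_def by auto
  have r2: "\<forall>x. 0 \<le> \<phi> x \<and> \<phi> x \<le> 1"
  proof
    fix x show "0 \<le> \<phi> x \<and> \<phi> x \<le> 1"
    proof (cases "x = z")
      case True
      then show ?thesis using Nnn Nle dnn unfolding \<phi>_def
        by (cases "d = 0") (auto simp: divide_le_eq_1)
    qed (use p2 \<phi>_def in auto)
  qed
  have phiV': "\<And>y. y \<in> V' \<Longrightarrow> \<phi> y = \<phi>' y" unfolding \<phi>_def using V by auto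
  have r3: "\<forall>x\<in>V-B. Lap V c \<phi> x = 0"
  proof
    fix x assume x: "x \<in> V - B"
    show "Lap V c \<phi> x = 0"
    proof (cases "x = z")
      case True
      have "Lap V c \<phi> x = (\<Sum>y\<in>V'. c z y * (\<phi> z - \<phi>' y))"
        unfolding Lap_def using True V finV' phiV' by (simp add: sum.insert)
      also have "\<dots> = \<phi> z * d - N" unfolding d_def N_def
        by (simp add: sum_subtractf right_diff_distrib sum_distrib_left mult.commute)
      also have "\<dots> = 0"
      proof (cases "d = 0")
        case True
        then have "N = 0" unfolding N_def using d0 by simp
        then show ?thesis using True by simp
      next
        case False then show ?thesis unfolding \<phi>_def by simp
      qed
      finally show ?thesis .
    next
      case False
      then have xV': "x \<in> V' - B" using x V by auto
      have "Lap V c \<phi> x = c x z * (\<phi>' x - N / d) + (\<Sum>y\<in>V'. c x y * (\<phi>' x - \<phi>' y))"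
        unfolding Lap_def using False V finV' phiV' xV' by (simp add: sum.insert \<phi>_def)
      also have "\<dots> = Lap V' c' \<phi>' x"
      proof -
        have "Lap V' c' \<phi>' x = (\<Sum>y\<in>V'. c x y * (\<phi>' x - \<phi>' y)) + c x z / d * (\<Sum>y\<in>V'. c z y * (\<phi>' x - \<phi>' y))"
        proof -
          have "\<And>y. c' x y * (\<phi>' x - \<phi>' y) = c x y * (\<phi>' x - \<phi>' y) + c x z / d * (c z y * (\<phi>' x - \<phi>' y))"
            unfolding c'_def by (simp add: algebra_simps add_divide_distrib[symmetric])
          then show ?thesis unfolding Lap_def by (simp add: sum.distrib sum_distrib_left)
        qed
        also have "(\<Sum>y\<in>V'. c z y * (\<phi>' x - \<phi>' y)) = d * \<phi>' x - N"
          unfolding d_def N_def by (simp add: sum_subtractf right_diff_distrib sum_distrib_left mult.commute)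
        finally have e: "Lap V' c' \<phi>' x = (\<Sum>y\<in>V'. c x y * (\<phi>' x - \<phi>' y)) + c x z / d * (d * \<phi>' x - N)" .
        show ?thesis
        proof (cases "d = 0")
          case True
          then have "c x z = 0" using d0 xV' Suc.prems(4) by (metis DiffD1)
          then show ?thesis using e True by simp
        next
          case False
          then show ?thesis using e by (simp add: field_simps)
        qed
      qed
      also have "\<dots> = 0" using p3 xV' by blast
      finally show ?thesis .
    qed
  qed
  show ?case using r1 r2 r3 by blast
qed

lemma dirichlet:
  assumes "\<forall>x. 0 \<le> h x \<and> h x \<le> (1::real)" "finite V" "B \<subseteq> V" "\<forall>x y. c x y = c y x" "\<forall>x y. c x y \<ge> 0"
  shows "\<exists>\<phi>. (\<forall>x\<in>B. \<phi> x = h x) \<and> (\<forall>x. 0 \<le> \<phi> x \<and> \<phi> x \<le> 1) \<and> (\<forall>x\<in>V-B. Lap V c \<phi> x = 0)"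
  using dirichlet_aux[OF assms(1) refl assms(2-5)] .

lemma sum_e:
  assumes "finite V" "u \<in> V"
  shows "(\<Sum>x\<in>V. F x * (if x = u then 1 else 0)) = (F u :: real)"
proof -
  have "(\<Sum>x\<in>V. F x * (if x = u then 1 else 0)) = (\<Sum>x\<in>V. if x = u then F x else 0)"
    by (intro sum.cong) auto
  also have "\<dots> = F u" using assms by simp
  finally show ?thesis .
qed

theorem mainTheorem15:
  fixes V :: "'a set" and c :: "'a \<Rightarrow> 'a \<Rightarrow> real" and \<epsilon> :: real and S :: "'a set"
  assumes "network V c"
    and "\<epsilon> > 0"
    and "S \<subseteq> V"
    and "card S \<ge> 2"
    and "\<forall>u\<in>S. \<forall>v\<in>S. u \<noteq> v \<longrightarrow> R_eff V c u v \<ge> \<epsilon>"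
  shows "\<exists>S'\<subseteq>S. 2 * card S' \<ge> card S \<and> (\<forall>v\<in>S'. R_eff_set V c v (S - {v}) \<ge> \<epsilon> / 4)"
proof -
  have finV: "finite V" and csym: "\<forall>x y. c x y = c y x" and cnn: "\<forall>x y. c x y \<ge> 0"
    using assms(1) unfolding network_def by auto
  have finS: "finite S" using assms(3) finV finite_subset by blast
  obtain r where r: "r \<in> S" using assms(4) by (metis card.empty ex_in_conv not_numeral_le_zero)
  define e where "e = (\<lambda>(u::'a) (x::'a). if x = u then (1::real) else 0)"
  have eb: "\<forall>x. 0 \<le> e u x \<and> e u x \<le> 1" for u by (simp add: e_def)
  have sume: "(\<Sum>x\<in>A. F x * e u x) = F u" if "finite A" "u \<in> A" for A F u
    unfolding e_def using sum_e[OF that] .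
  have enn: "energy V c f \<ge> 0" for f using energy_W W_nonneg[OF cnn] by metis
  have bdd: "bdd_below {energy V c f | f. f v = 1 \<and> (\<forall>x\<in>T. f x = 0)}" for v T
    using enn by (auto intro!: bdd_belowI[of _ 0])
  have ec_le: "eff_cond V c v T \<le> energy V c f" if "f v = 1" "\<forall>x\<in>T. f x = 0" for v T f
    unfolding eff_cond_def by (rule cInf_lower) (use that bdd in auto)
  have ec_ge: "a \<le> eff_cond V c v T"
    if "v \<notin> T" "\<And>f. f v = 1 \<Longrightarrow> \<forall>x\<in>T. f x = 0 \<Longrightarrow> a \<le> energy V c f" for v T a
  proof -
    have "energy V c (e v) \<in> {energy V c f | f. f v = 1 \<and> (\<forall>x\<in>T. f x = 0)}"
      using that(1) by (auto simp: e_def)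
    then show ?thesis unfolding eff_cond_def
      by (intro cInf_greatest) (use that(2) in auto)
  qed
  have pairpos: "eff_cond V c u {v} > 0 \<and> \<epsilon> \<le> 1 / eff_cond V c u {v}"
    if "u \<in> S" "v \<in> S" "u \<noteq> v" for u v
  proof -
    have h: "\<epsilon> \<le> 1 / eff_cond V c u {v}"
      using assms(5) that unfolding R_eff_def R_eff_set_def by blast
    then have "0 < 1 / eff_cond V c u {v}" using assms(2) by linarith
    then show ?thesis using h by (simp add: zero_less_divide_1_iff)
  qed
  have "\<forall>u\<in>S. \<exists>\<phi>. (\<forall>x\<in>S. \<phi> x = e u x) \<and> (\<forall>x. 0 \<le> \<phi> x \<and> \<phi> x \<le> 1) \<and> (\<forall>x\<in>V-S. Lap V c \<phi> x = 0)"
    using dirichlet[OF eb finV assms(3) csym cnn] by blast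
  from bchoice[OF this] obtain \<Phi> where \<Phi>: "\<forall>u\<in>S. (\<forall>x\<in>S. \<Phi> u x = e u x) \<and> (\<forall>x. 0 \<le> \<Phi> u x \<and> \<Phi> u x \<le> 1) \<and> (\<forall>x\<in>V-S. Lap V c (\<Phi> u) x = 0)"
    by blast
  have "\<forall>w\<in>S-{r}. \<exists>\<psi>. (\<forall>x\<in>{w,r}. \<psi> x = e w x) \<and> (\<forall>x. 0 \<le> \<psi> x \<and> \<psi> x \<le> 1) \<and> (\<forall>x\<in>V-{w,r}. Lap V c \<psi> x = 0)"
  proof
    fix w assume "w \<in> S - {r}"
    then have "{w,r} \<subseteq> V" using r assms(3) by auto
    then show "\<exists>\<psi>. (\<forall>x\<in>{w,r}. \<psi> x = e w x) \<and> (\<forall>x. 0 \<le> \<psi> x \<and> \<psi> x \<le> 1) \<and> (\<forall>x\<in>V-{w,r}. Lap V c \<psi> x = 0)"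
      using dirichlet[OF eb finV _ csym cnn] by blast
  qed
  from bchoice[OF this] obtain \<Psi> where \<Psi>: "\<forall>w\<in>S-{r}. (\<forall>x\<in>{w,r}. \<Psi> w x = e w x) \<and> (\<forall>x. 0 \<le> \<Psi> w x \<and> \<Psi> w x \<le> 1) \<and> (\<forall>x\<in>V-{w,r}. Lap V c (\<Psi> w) x = 0)"
    by blast
  define \<kappa> where "\<kappa> w = Lap V c (\<Psi> w) w" for w
  define g where "g w = (if w = r then (\<lambda>x. 0) else (\<lambda>x. \<Psi> w x / \<kappa> w))" for w
  have glap: "Lap V c (g w) x = e w x - e r x" if w: "w \<in> S" and x: "x \<in> V" for w x
  proof (cases "w = r")
    case True then show ?thesis by (simp add: g_def Lap_zero e_def)
  next
    case False
    have wr: "w \<in> V" "r \<in> V" "{w,r} \<subseteq> V" using w r assms(3) by auto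
    have P1: "\<Psi> w w = 1" "\<Psi> w r = 0" and P3: "\<forall>x\<in>V-{w,r}. Lap V c (\<Psi> w) x = 0"
      using \<Psi> w False by (auto simp: e_def)
    have "(\<Sum>x\<in>V. Lap V c (\<Psi> w) x) = (\<Sum>x\<in>{w,r}. Lap V c (\<Psi> w) x)"
      using P3 wr finV by (intro sum.mono_neutral_right) auto
    then have lr: "Lap V c (\<Psi> w) r = - \<kappa> w"
      using lap_sum0[OF csym] False unfolding \<kappa>_def by simp
    have "(\<Sum>x\<in>V. \<Psi> w x * Lap V c (\<Psi> w) x) = (\<Sum>x\<in>{w,r}. \<Psi> w x * Lap V c (\<Psi> w) x)"
      using P3 wr finV by (intro sum.mono_neutral_right) auto
    then have "W V c (\<Psi> w) (\<Psi> w) = \<kappa> w"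
      using green[OF csym] False P1 unfolding \<kappa>_def by simp
    then have "energy V c (\<Psi> w) = \<kappa> w" using energy_W by metis
    moreover have "eff_cond V c w {r} \<le> energy V c (\<Psi> w)" using P1 by (intro ec_le) auto
    moreover have "eff_cond V c w {r} > 0" using pairpos w r False by blast
    ultimately have kp: "\<kappa> w > 0" by linarith
    have "Lap V c (g w) x = Lap V c (\<Psi> w) x / \<kappa> w" using False by (simp add: g_def Lap_scale)
    then show ?thesis using kp lr P3 x False by (auto simp: e_def \<kappa>_def)
  qed
  have Phi_S: "\<Phi> u x = e u x" if "u \<in> S" "x \<in> S" for u x using \<Phi> that by blast
  have Phi_nn: "\<Phi> u x \<ge> 0" if "u \<in> S" for u x using \<Phi> that by blast
  have Phi_h: "Lap V c (\<Phi> u) x = 0" if "u \<in> S" "x \<in> V - S" for u x using \<Phi> that by blast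
  have sumS: "(\<Sum>x\<in>V. F x * Lap V c (\<Phi> u) x) = (\<Sum>x\<in>S. F x * Lap V c (\<Phi> u) x)" if "u \<in> S" for u F
    using Phi_h[OF that] finV assms(3) by (intro sum.mono_neutral_right) auto
  have lapS0: "(\<Sum>x\<in>S. Lap V c (\<Phi> u) x) = 0" if "u \<in> S" for u
    using sumS[OF that, of "\<lambda>_. 1"] lap_sum0[OF csym] by simp
  have Asym: "Lap V c (\<Phi> u) v = W V c (\<Phi> u) (\<Phi> v)" if "u \<in> S" "v \<in> S" for u v
  proof -
    have "W V c (\<Phi> u) (\<Phi> v) = (\<Sum>x\<in>V. \<Phi> v x * Lap V c (\<Phi> u) x)" using green[OF csym] by metis
    also have "\<dots> = (\<Sum>x\<in>S. \<Phi> v x * Lap V c (\<Phi> u) x)" using sumS that by blast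
    also have "\<dots> = (\<Sum>x\<in>S. Lap V c (\<Phi> u) x * e v x)"
      using Phi_S that by (intro sum.cong) auto
    also have "\<dots> = Lap V c (\<Phi> u) v" using sume finS that by blast
    finally show ?thesis by simp
  qed
  have lsym: "Lap V c (\<Phi> u) v = Lap V c (\<Phi> v) u" if "u \<in> S" "v \<in> S" for u v
    using Asym that W_sym by metis
  have lneg: "Lap V c (\<Phi> u) v \<le> 0" if "u \<in> S" "v \<in> S" "u \<noteq> v" for u v
  proof -
    have "Lap V c (\<Phi> u) v = (\<Sum>y\<in>V. c v y * (0 - \<Phi> u y))"
      unfolding Lap_def using Phi_S[of u v] that by (simp add: e_def)
    also have "\<dots> \<le> 0" using cnn Phi_nn[OF that(1)] by (intro sum_nonpos) (simp add: mult_nonneg_nonneg)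
    finally show ?thesis .
  qed
  define D where "D u = Lap V c (\<Phi> u) u" for u
  have Den: "energy V c (\<Phi> u) = D u" if "u \<in> S" for u
    using Asym[OF that that] energy_W unfolding D_def by metis
  have Dnn: "D u \<ge> 0" if "u \<in> S" for u using Den[OF that] enn by metis
  define M where "M u v = W V c (g u) (g v)" for u v
  define R where "R u v = W V c (\<lambda>x. g u x - g v x) (\<lambda>x. g u x - g v x)" for u v
  have Rexp: "R u v = M u u + M v v - 2 * M u v" for u v
    using W_quad[of V c "g u" 1 "g v"] unfolding R_def M_def by simp
  have Mval: "M u v = g u v - g u r" if "u \<in> S" "v \<in> S" for u v
  proof -
    have "M u v = (\<Sum>x\<in>V. g u x * Lap V c (g v) x)" unfolding M_def using green[OF csym] W_sym by metis
    also have "\<dots> = (\<Sum>x\<in>V. g u x * e v x) - (\<Sum>x\<in>V. g u x * e r x)"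
      using glap[OF that(2)] by (simp add: right_diff_distrib sum_subtractf)
    also have "\<dots> = g u v - g u r"
    proof -
      have "v \<in> V" "r \<in> V" using that(2) r assms(3) by auto
      then show ?thesis using sume[OF finV] by simp
    qed
    finally show ?thesis .
  qed
  have Rge: "\<epsilon> \<le> R u v" if uv: "u \<in> S" "v \<in> S" "u \<noteq> v" for u v
  proof -
    define \<psi> where "\<psi> = (\<lambda>x. g u x - g v x)"
    have uvV: "u \<in> V" "v \<in> V" using uv assms(3) by auto
    have lp: "Lap V c \<psi> x = e u x - e v x" if "x \<in> V" for x
      unfolding \<psi>_def Lap_diff using glap uv that by simp
    have key: "1 \<le> R u v * energy V c f" if f: "f u = 1" "f v = 0" for f
    proof -
      have "W V c \<psi> f = (\<Sum>x\<in>V. f x * Lap V c \<psi> x)" using green[OF csym] by metis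
      also have "\<dots> = (\<Sum>x\<in>V. f x * e u x) - (\<Sum>x\<in>V. f x * e v x)"
        using lp by (simp add: right_diff_distrib sum_subtractf)
      also have "\<dots> = 1" using sume finV uvV f by simp
      finally have "W V c \<psi> f = 1" .
      from CS1[OF cnn this] show ?thesis unfolding R_def \<psi>_def[symmetric] using energy_W by metis
    qed
    have "1 \<le> R u v * energy V c (e u)" using key uv by (simp add: e_def)
    moreover have "R u v \<ge> 0" unfolding R_def using W_nonneg[OF cnn] by blast
    ultimately have Rp: "R u v > 0" using enn[of "e u"]
      by (metis less_eq_real_def mult_zero_left not_one_le_zero)
    have "1 / R u v \<le> eff_cond V c u {v}"
    proof (rule ec_ge)
      show "u \<notin> {v}" using uv by simp
      fix f :: "'a \<Rightarrow> real" assume "f u = 1" "\<forall>x\<in>{v}. f x = 0"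
      then have "1 \<le> R u v * energy V c f" using key by simp
      then show "1 / R u v \<le> energy V c f" using Rp by (simp add: field_simps)
    qed
    moreover have "eff_cond V c u {v} > 0" "\<epsilon> \<le> 1 / eff_cond V c u {v}" using pairpos uv by auto
    ultimately have "1 / eff_cond V c u {v} \<le> R u v" using Rp
      by (simp add: field_simps)
    with \<open>\<epsilon> \<le> 1 / eff_cond V c u {v}\<close> show ?thesis by linarith
  qed
  have R0: "R u u = 0" for u unfolding R_def W_def by simp
  have Tval: "(\<Sum>v\<in>S. Lap V c (\<Phi> u) v * M u v) = 1 - e u r" if u: "u \<in> S" for u
  proof -
    have "(\<Sum>v\<in>S. Lap V c (\<Phi> u) v * M u v) = (\<Sum>v\<in>S. g u v * Lap V c (\<Phi> u) v) - g u r * (\<Sum>v\<in>S. Lap V c (\<Phi> u) v)"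
    proof -
      have "(\<Sum>v\<in>S. Lap V c (\<Phi> u) v * M u v) = (\<Sum>v\<in>S. g u v * Lap V c (\<Phi> u) v - g u r * Lap V c (\<Phi> u) v)"
        using Mval u by (intro sum.cong) (auto simp: left_diff_distrib[symmetric] mult.commute)
      then show ?thesis by (simp add: sum_subtractf sum_distrib_left)
    qed
    also have "\<dots> = (\<Sum>v\<in>V. g u v * Lap V c (\<Phi> u) v)" using lapS0 u sumS by simp
    also have "\<dots> = W V c (g u) (\<Phi> u)" using green[OF csym] W_sym by metis
    also have "\<dots> = (\<Sum>x\<in>V. \<Phi> u x * Lap V c (g u) x)" using green[OF csym] by metis
    also have "\<dots> = (\<Sum>x\<in>V. \<Phi> u x * e u x) - (\<Sum>x\<in>V. \<Phi> u x * e r x)"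
      using glap[OF u] by (simp add: right_diff_distrib sum_subtractf)
    also have "\<dots> = \<Phi> u u - \<Phi> u r"
    proof -
      have "u \<in> V" "r \<in> V" using u r assms(3) by auto
      then show ?thesis using sume[OF finV] by simp
    qed
    also have "\<dots> = 1 - e u r" using Phi_S u r by (simp add: e_def)
    finally show ?thesis .
  qed
  have total: "(\<Sum>u\<in>S. \<Sum>v\<in>S. Lap V c (\<Phi> u) v * R u v) = - 2 * (real (card S) - 1)"
  proof -
    have "(\<Sum>u\<in>S. \<Sum>v\<in>S. Lap V c (\<Phi> u) v * R u v)
        = (\<Sum>u\<in>S. M u u * (\<Sum>v\<in>S. Lap V c (\<Phi> u) v)) + (\<Sum>u\<in>S. \<Sum>v\<in>S. Lap V c (\<Phi> u) v * M v v)
          - 2 * (\<Sum>u\<in>S. \<Sum>v\<in>S. Lap V c (\<Phi> u) v * M u v)"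
      unfolding Rexp by (simp add: algebra_simps sum.distrib sum_subtractf sum_distrib_left)
    also have "(\<Sum>u\<in>S. M u u * (\<Sum>v\<in>S. Lap V c (\<Phi> u) v)) = 0" using lapS0 by simp
    also have "(\<Sum>u\<in>S. \<Sum>v\<in>S. Lap V c (\<Phi> u) v * M v v) = (\<Sum>v\<in>S. M v v * (\<Sum>u\<in>S. Lap V c (\<Phi> v) u))"
      by (subst sum.swap) (simp add: lsym sum_distrib_left mult.commute)
    also have "\<dots> = 0" using lapS0 by simp
    also have "(\<Sum>u\<in>S. \<Sum>v\<in>S. Lap V c (\<Phi> u) v * M u v) = (\<Sum>u\<in>S. 1 - e u r)"
      using Tval by simp
    also have "\<dots> = real (card S) - 1" using finS r by (simp add: sum_subtractf e_def)
    finally show ?thesis by simp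
  qed
  have each: "(\<Sum>v\<in>S. Lap V c (\<Phi> u) v * R u v) \<le> - \<epsilon> * D u" if u: "u \<in> S" for u
  proof -
    have "(\<Sum>v\<in>S. Lap V c (\<Phi> u) v * R u v) = (\<Sum>v\<in>S-{u}. Lap V c (\<Phi> u) v * R u v)"
      using sum.remove[OF finS u, of "\<lambda>v. Lap V c (\<Phi> u) v * R u v"] R0 by simp
    also have "\<dots> \<le> (\<Sum>v\<in>S-{u}. Lap V c (\<Phi> u) v * \<epsilon>)"
      using lneg Rge u by (intro sum_mono mult_left_mono_neg) auto
    also have "\<dots> = \<epsilon> * (\<Sum>v\<in>S-{u}. Lap V c (\<Phi> u) v)" by (simp add: sum_distrib_left mult.commute)
    also have "(\<Sum>v\<in>S-{u}. Lap V c (\<Phi> u) v) = - D u"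
      using sum.remove[OF finS u, of "Lap V c (\<Phi> u)"] lapS0[OF u] unfolding D_def by simp
    finally show ?thesis by simp
  qed
  have "- 2 * (real (card S) - 1) \<le> (\<Sum>u\<in>S. - \<epsilon> * D u)"
    unfolding total[symmetric] by (intro sum_mono each)
  then have sumD: "\<epsilon> * (\<Sum>u\<in>S. D u) \<le> 2 * (real (card S) - 1)"
    by (simp add: sum_distrib_left sum_negf)
  define S' where "S' = {v\<in>S. D v \<le> 4 / \<epsilon>}"
  have good: "R_eff_set V c v (S - {v}) \<ge> \<epsilon> / 4" if v: "v \<in> S'" for v
  proof -
    have vS: "v \<in> S" and Dv: "D v \<le> 4 / \<epsilon>" using v S'_def by auto
    have "S - {v} \<noteq> {}"
    proof
      assume "S - {v} = {}"
      then have "S \<subseteq> {v}" by auto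
      then have "card S \<le> 1" using card_mono[of "{v}" S] by simp
      with assms(4) show False by simp
    qed
    then obtain w where w: "w \<in> S" "w \<noteq> v" by blast
    have "eff_cond V c v {w} \<le> eff_cond V c v (S - {v})"
      by (rule ec_ge) (use w in \<open>auto intro: ec_le\<close>)
    moreover have "eff_cond V c v {w} > 0" using pairpos vS w by auto
    moreover have "eff_cond V c v (S - {v}) \<le> D v"
      using Den[OF vS] ec_le[of "\<Phi> v" v "S - {v}"] Phi_S vS by (auto simp: e_def)
    ultimately have "0 < eff_cond V c v (S - {v})" "eff_cond V c v (S - {v}) \<le> 4 / \<epsilon>" using Dv by auto
    then show ?thesis unfolding R_eff_set_def using assms(2) by (simp add: field_simps)
  qed
  have "2 * card S' \<ge> card S"
  proof (rule ccontr)
    assume "\<not> ?thesis"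
    then have lt: "2 * card S' < card S" by simp
    define Bd where "Bd = S - S'"
    have S'S: "S' \<subseteq> S" unfolding S'_def by auto
    have cB: "card Bd = card S - card S'" unfolding Bd_def using S'S finS by (simp add: card_Diff_subset finite_subset)
    have cB2: "card S + 1 \<le> 2 * card Bd" using lt cB card_mono[OF finS S'S] by linarith
    have finB: "finite Bd" using finS Bd_def by simp
    have "Bd \<noteq> {}" using cB2 by auto
    then have "(\<Sum>u\<in>Bd. 4 / \<epsilon>) < (\<Sum>u\<in>Bd. D u)"
      using finB by (intro sum_strict_mono) (auto simp: Bd_def S'_def)
    also have "\<dots> \<le> (\<Sum>u\<in>S. D u)" using finS Dnn by (intro sum_mono2) (auto simp: Bd_def)
    finally have "real (card Bd) * (4 / \<epsilon>) < (\<Sum>u\<in>S. D u)" by simp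
    then have "real (card Bd) * 4 < \<epsilon> * (\<Sum>u\<in>S. D u)" using assms(2) by (simp add: field_simps)
    with sumD have "real (card Bd) * 4 < 2 * (real (card S) - 1)" by linarith
    moreover have "real (card S) + 1 \<le> 2 * real (card Bd)" using cB2 by linarith
    ultimately show False by (smt (verit))
  qed
  moreover have "S' \<subseteq> S" unfolding S'_def by auto
  ultimately show ?thesis using good by blast
qed

end
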